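(* Let $(\mathbf C,I)$ be an orthogonally based finite-type chain complex of real inner product spaces and let $M$ be an $(n,n-1)$-free Morse matching on it, with Morse retraction $\Phi:\mathbf C^M\to\mathbf C$, $\Psi:\mathbf C\to\mathbf C^M$. Then (1) $\Phi_n:\mathbf C_n^M\to\mathbf C_n$ and (2) $\Psi_{n-1}^\dagger:\mathbf C^M_{n-1}\to\mathbf C_{n-1}$ are the subspace inclusions, and hence isometries.
   Context: Based chain complex: chain complex $(\mathbf C,\partial)$ of finite-dimensional real inner product spaces $\mathbf C_n$, $n\ge0$, with disjoint finite index sets $I_n$ and $\mathbf C_n=\bigoplus_{\alpha\in I_n}C_\alpha$; orthogonally based means $C_\alpha\perp C_{\alpha'}$ for $\alpha\ne\alpha'$. $\partial_{\beta,\alpha}=\pi_\beta\partial_n i_\alpha$. Graph: edges $\alpha\to\beta$ when $\partial_{\beta,\alpha}\ne0$. Morse matching: edge set $M$ with each cell on at most one edge, $\partial_{\beta,\alpha}$ an isomorphism for $\alpha\to\beta\in M$, and "directed path from $\alpha$ to $\beta$ in the graph with $M$ reversed" a partial order on each $I_n$; $M^0$ = unmatched cells. $M$ is $(n,n-1)$-free if no edge of $M$ joins an $n$-cell to an $(n-1)$-cell. With $\Gamma_{\beta,\alpha}$ the sum over directed paths from $\alpha$ to $\beta$ in the reversed graph of composites of $\partial_{\sigma_{i+1},\sigma_i}$ (ordinary steps) and $-\partial_{\sigma_i,\sigma_{i+1}}^{-1}$ (reversed matched edges), trivial path giving the identity: $\mathbf C^M_n=\bigoplus_{\alpha\in I_n\cap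 M^0}C_\alpha$ (restricted inner product), $\Phi(x)=\sum_{\beta\in I_n}\Gamma_{\beta,\alpha}(x)$ for $x\in C_\alpha$, $\alpha\in M^0\cap I_n$, and $\Psi(x)=\sum_{\beta\in M^0\cap I_n}\Gamma_{\beta,\alpha}(x)$ for $x\in C_\alpha$, $\alpha\in I_n$. $\dagger$ denotes adjoint. *)

theory Defs
  imports "HOL-Analysis.Analysis"
begin

text \<open>
The whole chain complex lives inside one real inner
product space of type 'v (think of it as the orthogonal sum of all C_n).
Cells are elements of a set I of type 'c; deg assigns to a cell its degree,
so I_k = cells_of I deg k.  Cell a is the subspace C_a.  The chain group
C_k is the (orthogonal direct) sum of the C_a with a in I_k.
\<close>

definition cells_of :: "'c set \<Rightarrow> ('c \<Rightarrow> nat) \<Rightarrow> nat \<Rightarrow> 'c set" where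
  "cells_of I deg k = {a \<in> I. deg a = k}"

definition chain_space ::
  "'c set \<Rightarrow> ('c \<Rightarrow> nat) \<Rightarrow> ('c \<Rightarrow> 'v::real_vector set) \<Rightarrow> nat \<Rightarrow> 'v set" where
  "chain_space I deg Cell k = span (\<Union>a \<in> cells_of I deg k. Cell a)"

definition orth_based_chain_complex ::
  "'c set \<Rightarrow> ('c \<Rightarrow> nat) \<Rightarrow> ('c \<Rightarrow> 'v::real_inner set) \<Rightarrow> ('v \<Rightarrow> 'v) \<Rightarrow> bool" where
  "orth_based_chain_complex I deg Cell d \<longleftrightarrow>
     (\<forall>k. finite (cells_of I deg k)) \<and>
     (\<forall>a \<in> I. subspace (Cell a) \<and> (\<exists>B. finite B \<and> span B = Cell a)) \<and>
     (\<forall>a \<in> I. \<forall>b \<in> I. a \<noteq> b \<longrightarrow> (\<forall>x \<in> Cell a. \<forall>y \<in> Cell b. x \<bullet> y = 0)) \<and>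
     linear d \<and>
     (\<forall>k. \<forall>x \<in> chain_space I deg Cell (Suc k). d x \<in> chain_space I deg Cell k) \<and>
     (\<forall>x \<in> chain_space I deg Cell 0. d x = 0) \<and>
     (\<forall>k. \<forall>x \<in> chain_space I deg Cell k. d (d x) = 0)"

text \<open>Direct-sum projection pi_b of a vector of (the sum of the C_g, g in J) onto C_b.\<close>
definition comp_proj :: "'c set \<Rightarrow> ('c \<Rightarrow> 'v::real_vector set) \<Rightarrow> 'c \<Rightarrow> 'v \<Rightarrow> 'v" where
  "comp_proj J Cell b x =
     (THE y. \<exists>f. (\<forall>g \<in> J. f g \<in> Cell g) \<and> x = (\<Sum>g \<in> J. f g) \<and> y = f b)"

text \<open>Matrix entry d_(b,a) = pi_b o d o i_a (applied to x in C_a).\<close>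
definition bd_block ::
  "'c set \<Rightarrow> ('c \<Rightarrow> nat) \<Rightarrow> ('c \<Rightarrow> 'v::real_vector set) \<Rightarrow> ('v \<Rightarrow> 'v) \<Rightarrow> 'c \<Rightarrow> 'c \<Rightarrow> 'v \<Rightarrow> 'v" where
  "bd_block I deg Cell d b a x = comp_proj (cells_of I deg (deg b)) Cell b (d x)"

definition cc_edge ::
  "'c set \<Rightarrow> ('c \<Rightarrow> nat) \<Rightarrow> ('c \<Rightarrow> 'v::real_vector set) \<Rightarrow> ('v \<Rightarrow> 'v) \<Rightarrow> 'c \<Rightarrow> 'c \<Rightarrow> bool" where
  "cc_edge I deg Cell d a b \<longleftrightarrow> a \<in> I \<and> b \<in> I \<and> deg a = Suc (deg b) \<and>
     (\<exists>x \<in> Cell a. bd_block I deg Cell d b a x \<noteq> 0)"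

definition rev_edge ::
  "'c set \<Rightarrow> ('c \<Rightarrow> nat) \<Rightarrow> ('c \<Rightarrow> 'v::real_vector set) \<Rightarrow> ('v \<Rightarrow> 'v) \<Rightarrow> ('c \<times> 'c) set
   \<Rightarrow> 'c \<Rightarrow> 'c \<Rightarrow> bool" where
  "rev_edge I deg Cell d M s t \<longleftrightarrow>
     (cc_edge I deg Cell d s t \<and> (s, t) \<notin> M) \<or> (t, s) \<in> M"

definition morse_matching ::
  "'c set \<Rightarrow> ('c \<Rightarrow> nat) \<Rightarrow> ('c \<Rightarrow> 'v::real_vector set) \<Rightarrow> ('v \<Rightarrow> 'v) \<Rightarrow> ('c \<times> 'c) set \<Rightarrow> bool" where
  "morse_matching I deg Cell d M \<longleftrightarrow>
     M \<subseteq> {(a, b). cc_edge I deg Cell d a b} \<and>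
     (\<forall>e \<in> M. \<forall>e' \<in> M. e \<noteq> e' \<longrightarrow> {fst e, snd e} \<inter> {fst e', snd e'} = {}) \<and>
     (\<forall>(a, b) \<in> M. bij_betw (bd_block I deg Cell d b a) (Cell a) (Cell b)) \<and>
     (\<forall>k. \<forall>a \<in> cells_of I deg k. \<forall>b \<in> cells_of I deg k.
        (rev_edge I deg Cell d M)\<^sup>*\<^sup>* a b \<and> (rev_edge I deg Cell d M)\<^sup>*\<^sup>* b a \<longrightarrow> a = b)"

definition unmatched :: "'c set \<Rightarrow> ('c \<times> 'c) set \<Rightarrow> 'c set" where
  "unmatched I M = {a \<in> I. \<forall>(s, t) \<in> M. a \<noteq> s \<and> a \<noteq> t}"

definition nn1_free :: "('c \<Rightarrow> nat) \<Rightarrow> ('c \<times> 'c) set \<Rightarrow> nat \<Rightarrow> bool" where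
  "nn1_free deg M n \<longleftrightarrow> \<not> (\<exists>(a, b) \<in> M. deg a = n \<and> deg b = n - 1)"

definition rpaths ::
  "'c set \<Rightarrow> ('c \<Rightarrow> nat) \<Rightarrow> ('c \<Rightarrow> 'v::real_vector set) \<Rightarrow> ('v \<Rightarrow> 'v) \<Rightarrow> ('c \<times> 'c) set
   \<Rightarrow> 'c \<Rightarrow> 'c \<Rightarrow> 'c list set" where
  "rpaths I deg Cell d M a b =
     {p. p \<noteq> [] \<and> hd p = a \<and> last p = b \<and> successively (rev_edge I deg Cell d M) p}"

definition step_map ::
  "'c set \<Rightarrow> ('c \<Rightarrow> nat) \<Rightarrow> ('c \<Rightarrow> 'v::real_vector set) \<Rightarrow> ('v \<Rightarrow> 'v) \<Rightarrow> ('c \<times> 'c) set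
   \<Rightarrow> 'c \<Rightarrow> 'c \<Rightarrow> 'v \<Rightarrow> 'v" where
  "step_map I deg Cell d M s t x =
     (if (t, s) \<in> M then - inv_into (Cell t) (bd_block I deg Cell d s t) x
      else bd_block I deg Cell d t s x)"

fun path_map ::
  "'c set \<Rightarrow> ('c \<Rightarrow> nat) \<Rightarrow> ('c \<Rightarrow> 'v::real_vector set) \<Rightarrow> ('v \<Rightarrow> 'v) \<Rightarrow> ('c \<times> 'c) set
   \<Rightarrow> 'c list \<Rightarrow> 'v \<Rightarrow> 'v" where
  "path_map I deg Cell d M [] x = x"
| "path_map I deg Cell d M [s] x = x"
| "path_map I deg Cell d M (s # t # ps) x =
     path_map I deg Cell d M (t # ps) (step_map I deg Cell d M s t x)"

definition Gamma ::
  "'c set \<Rightarrow> ('c \<Rightarrow> nat) \<Rightarrow> ('c \<Rightarrow> 'v::real_vector set) \<Rightarrow> ('v \<Rightarrow> 'v) \<Rightarrow> ('c \<times> 'c) set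
   \<Rightarrow> 'c \<Rightarrow> 'c \<Rightarrow> 'v \<Rightarrow> 'v" where
  "Gamma I deg Cell d M b a x = (\<Sum>p \<in> rpaths I deg Cell d M a b. path_map I deg Cell d M p x)"

definition morse_space ::
  "'c set \<Rightarrow> ('c \<Rightarrow> nat) \<Rightarrow> ('c \<Rightarrow> 'v::real_vector set) \<Rightarrow> ('c \<times> 'c) set \<Rightarrow> nat \<Rightarrow> 'v set" where
  "morse_space I deg Cell M k = span (\<Union>a \<in> cells_of I deg k \<inter> unmatched I M. Cell a)"

definition morse_Phi ::
  "'c set \<Rightarrow> ('c \<Rightarrow> nat) \<Rightarrow> ('c \<Rightarrow> 'v::real_vector set) \<Rightarrow> ('v \<Rightarrow> 'v) \<Rightarrow> ('c \<times> 'c) set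
   \<Rightarrow> nat \<Rightarrow> 'v \<Rightarrow> 'v" where
  "morse_Phi I deg Cell d M k x =
     (\<Sum>a \<in> cells_of I deg k \<inter> unmatched I M. \<Sum>b \<in> cells_of I deg k.
        Gamma I deg Cell d M b a (comp_proj (cells_of I deg k) Cell a x))"

definition morse_Psi ::
  "'c set \<Rightarrow> ('c \<Rightarrow> nat) \<Rightarrow> ('c \<Rightarrow> 'v::real_vector set) \<Rightarrow> ('v \<Rightarrow> 'v) \<Rightarrow> ('c \<times> 'c) set
   \<Rightarrow> nat \<Rightarrow> 'v \<Rightarrow> 'v" where
  "morse_Psi I deg Cell d M k x =
     (\<Sum>a \<in> cells_of I deg k. \<Sum>b \<in> cells_of I deg k \<inter> unmatched I M.
        Gamma I deg Cell d M b a (comp_proj (cells_of I deg k) Cell a x))"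

definition is_adjoint_between :: "'v::real_inner set \<Rightarrow> 'v set \<Rightarrow> ('v \<Rightarrow> 'v) \<Rightarrow> ('v \<Rightarrow> 'v) \<Rightarrow> bool" where
  "is_adjoint_between X Y f g \<longleftrightarrow>
     (\<forall>x \<in> X. f x \<in> Y) \<and> (\<forall>y \<in> Y. g y \<in> X) \<and> (\<forall>x \<in> X. \<forall>y \<in> Y. f x \<bullet> y = x \<bullet> g y)"

end

theory Submission
  imports Defs
begin

lemma decomp_exists:
  fixes S :: "'a \<Rightarrow> 'v::real_vector set"
  assumes "finite J" "\<forall>a\<in>J. subspace (S a)" "x \<in> span (\<Union>a\<in>J. S a)"
  shows "\<exists>f. (\<forall>g\<in>J. f g \<in> S g) \<and> x = sum f J"
  using assms
proof (induction J arbitrary: x rule: finite_induct)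
  case empty
  then show ?case by auto
next
  case (insert j J)
  have "x \<in> span (S j \<union> (\<Union>a\<in>J. S a))" using insert.prems by simp
  then obtain u v where uv: "x = u + v" "u \<in> span (S j)" "v \<in> span (\<Union>a\<in>J. S a)"
    unfolding span_Un by blast
  have u: "u \<in> S j" using uv(2) insert.prems span_eq_iff by blast
  obtain f where f: "\<forall>g\<in>J. f g \<in> S g" "v = sum f J" using insert uv(3) by blast
  have "sum (f(j := u)) J = sum f J" using insert.hyps by (intro sum.cong) auto
  then show ?case using f u uv insert.hyps
    by (intro exI[of _ "f(j := u)"]) auto
qed

lemma decomp_unique:
  assumes "finite J" "\<forall>a\<in>J. subspace (S a)"
    "\<forall>a\<in>J. \<forall>b\<in>J. a \<noteq> b \<longrightarrow> (\<forall>x\<in>S a. \<forall>y\<in>S b. x \<bullet> y = 0)"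
    "\<forall>g\<in>J. f g \<in> S g" "\<forall>g\<in>J. f' g \<in> S g" "sum f J = sum f' J" "b \<in> J"
  shows "f b = (f' b :: 'v::real_inner)"
proof -
  define h where "h g = f g - f' g" for g
  have hS: "\<forall>g\<in>J. h g \<in> S g" using assms(2,4,5) by (auto simp: h_def subspace_diff)
  have "sum h J = 0" using assms(6) by (simp add: h_def sum_subtractf)
  then have "0 = sum h J \<bullet> h b" by simp
  also have "\<dots> = (\<Sum>g\<in>J. h g \<bullet> h b)" by (simp add: inner_sum_left)
  also have "\<dots> = h b \<bullet> h b"
    using assms(1,3,7) hS by (subst sum.remove[of J b]) (auto intro!: sum.neutral, blast)
  finally have "h b = 0" by simp
  then show ?thesis by (simp add: h_def)
qed

lemma comp_proj_eq:
  assumes "finite J" "\<forall>a\<in>J. subspace (S a)"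
    "\<forall>a\<in>J. \<forall>b\<in>J. a \<noteq> b \<longrightarrow> (\<forall>x\<in>S a. \<forall>y\<in>S b. x \<bullet> y = 0)"
    "\<forall>g\<in>J. f g \<in> S g" "x = sum f J" "b \<in> J"
  shows "comp_proj J S b x = (f b :: 'v::real_inner)"
  unfolding comp_proj_def
proof (rule the_equality)
  show "\<exists>f'. (\<forall>g\<in>J. f' g \<in> S g) \<and> x = sum f' J \<and> f b = f' b" using assms by blast
next
  fix y assume "\<exists>f'. (\<forall>g\<in>J. f' g \<in> S g) \<and> x = sum f' J \<and> y = f' b"
  then obtain f' where "\<forall>g\<in>J. f' g \<in> S g" "x = sum f' J" "y = f' b" by blast
  then show "y = f b" using decomp_unique[OF assms(1-3) _ assms(4), of f' b] assms(5,6) by simp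
qed


lemma unmatchedD: "a \<in> unmatched I M \<Longrightarrow> (a, y) \<notin> M \<and> (y, a) \<notin> M"
  unfolding unmatched_def by auto

lemma mm_sub: "morse_matching I deg Cell d M \<Longrightarrow> (t, s) \<in> M \<Longrightarrow> cc_edge I deg Cell d t s"
  unfolding morse_matching_def by auto

lemma step_deg:
  assumes mm: "morse_matching I deg Cell d M" and nn: "nn1_free deg M n" and n1: "n \<ge> 1"
    and R: "rev_edge I deg Cell d M s t" and ds: "deg s \<le> n - 1"
  shows "deg t \<le> n - 1"
proof -
  from R consider "cc_edge I deg Cell d s t" | "(t, s) \<in> M" unfolding rev_edge_def by blast
  then show ?thesis
  proof cases
    case 1 then show ?thesis using ds unfolding cc_edge_def by simp
  next
    case 2
    then have "cc_edge I deg Cell d t s" using mm by (rule mm_sub[rotated])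
    then have "deg t = Suc (deg s)" unfolding cc_edge_def by simp
    moreover have "\<not> (deg t = n \<and> deg s = n - 1)" using nn 2 unfolding nn1_free_def by blast
    ultimately show ?thesis using ds n1 by linarith
  qed
qed

lemma path_deg:
  assumes mm: "morse_matching I deg Cell d M" and nn: "nn1_free deg M n" and n1: "n \<ge> 1"
  shows "successively (rev_edge I deg Cell d M) p \<Longrightarrow> p \<noteq> [] \<Longrightarrow> deg (hd p) \<le> n - 1
    \<Longrightarrow> \<forall>x\<in>set p. deg x \<le> n - 1"
proof (induction p)
  case Nil then show ?case by simp
next
  case (Cons x p)
  show ?case
  proof (cases p)
    case Nil then show ?thesis using Cons by simp
  next
    case (Cons y r)
    with Cons.prems have R: "rev_edge I deg Cell d M x y" and sp: "successively (rev_edge I deg Cell d M) p"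
      by (auto simp: successively_Cons)
    have "deg y \<le> n - 1" using step_deg[OF mm nn n1 R] Cons.prems by simp
    then have "\<forall>z\<in>set p. deg z \<le> n - 1" using Cons.IH sp Cons by simp
    then show ?thesis using Cons.prems by simp
  qed
qed

lemma path_last_unmatched:
  assumes mm: "morse_matching I deg Cell d M" and nn: "nn1_free deg M n" and n1: "n \<ge> 1"
  shows "successively (rev_edge I deg Cell d M) p \<Longrightarrow> p \<noteq> [] \<Longrightarrow> deg (hd p) \<le> n - 1
    \<Longrightarrow> last p \<in> unmatched I M \<Longrightarrow> deg (last p) = n - 1 \<Longrightarrow> p = [hd p]"
proof (induction p)
  case Nil then show ?case by simp
next
  case (Cons x p)
  show ?case
  proof (cases p)
    case Nil then show ?thesis by simp
  next
    case (Cons y r)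
    with Cons.prems have R: "rev_edge I deg Cell d M x y" and sp: "successively (rev_edge I deg Cell d M) p"
      by (auto simp: successively_Cons)
    have hy: "deg (hd p) \<le> n - 1" using step_deg[OF mm nn n1 R] Cons.prems(3) Cons by simp
    have pne: "p \<noteq> []" using Cons by simp
    have lp: "last (x # p) = last p" using pne by simp
    have "p = [hd p]" using Cons.IH[OF sp pne hy] Cons.prems(4,5) unfolding lp by blast
    then have py: "p = [y]" using Cons by simp
    have um: "y \<in> unmatched I M" "deg y = n - 1" using Cons.prems(4,5) unfolding lp py by auto
    from R consider "cc_edge I deg Cell d x y" | "(y, x) \<in> M" unfolding rev_edge_def by blast
    then show ?thesis
    proof cases
      case 1 then have "deg x = Suc (deg y)" unfolding cc_edge_def by simp
      then show ?thesis using um Cons.prems n1 by simp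
    next
      case 2 then show ?thesis using unmatchedD[OF um(1)] by blast
    qed
  qed
qed

lemma Gamma_triv:
  assumes "rpaths I deg Cell d M a b = (if a = b then {[a]} else {})"
  shows "Gamma I deg Cell d M b a y = (if b = a then y else 0)"
  using assms unfolding Gamma_def by auto

lemma rpaths_part1:
  assumes mm: "morse_matching I deg Cell d M" and nn: "nn1_free deg M n" and n1: "n \<ge> 1"
    and a: "a \<in> unmatched I M" "deg a = n" and b: "deg b = n"
  shows "rpaths I deg Cell d M a b = (if a = b then {[a]} else {})"
proof -
  have "p = [a]" if p: "p \<in> rpaths I deg Cell d M a b" for p
  proof (rule ccontr)
    assume ne: "p \<noteq> [a]"
    from p have p0: "p \<noteq> []" "hd p = a" "last p = b" "successively (rev_edge I deg Cell d M) p"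
      unfolding rpaths_def by auto
    then obtain q where q: "p = a # q" by (cases p) auto
    with ne obtain y r where yr: "q = y # r" by (cases q) auto
    from p0(4) q yr have R: "rev_edge I deg Cell d M a y" and sq: "successively (rev_edge I deg Cell d M) q"
      by (auto simp: successively_Cons)
    have "cc_edge I deg Cell d a y" using R unmatchedD[OF a(1)] unfolding rev_edge_def by blast
    then have "deg y = n - 1" using a unfolding cc_edge_def by simp
    then have "\<forall>z\<in>set q. deg z \<le> n - 1" using path_deg[OF mm nn n1 sq] yr by simp
    moreover have "last q = b" using p0(3) q yr by simp
    moreover have "last q \<in> set q" using yr by simp
    ultimately have "deg b \<le> n - 1" by metis
    then show False using b n1 by simp
  qed
  note P = this
  have Q1: "a = b \<Longrightarrow> [a] \<in> rpaths I deg Cell d M a b" unfolding rpaths_def by simp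
  have Q2: "[a] \<in> rpaths I deg Cell d M a b \<Longrightarrow> a = b" unfolding rpaths_def by simp
  show ?thesis
  proof (cases "a = b")
    case True
    have "rpaths I deg Cell d M a b = {[a]}"
    proof (intro equalityI subsetI)
      fix p assume "p \<in> rpaths I deg Cell d M a b" then show "p \<in> {[a]}" using P by simp
    next
      fix p assume "p \<in> {[a]}" then show "p \<in> rpaths I deg Cell d M a b" using Q1 True by simp
    qed
    then show ?thesis using True by simp
  next
    case False
    have "rpaths I deg Cell d M a b = {}"
    proof (intro equalityI subsetI)
      fix p assume "p \<in> rpaths I deg Cell d M a b" then show "p \<in> {}" using P Q2 False by metis
    qed simp
    then show ?thesis using False by simp
  qed
qed

lemma rpaths_part3:
  assumes mm: "morse_matching I deg Cell d M" and nn: "nn1_free deg M n" and n1: "n \<ge> 1"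
    and a: "deg a = n - 1" and b: "b \<in> unmatched I M" "deg b = n - 1"
  shows "rpaths I deg Cell d M a b = (if a = b then {[a]} else {})"
proof -
  have "p = [a]" if p: "p \<in> rpaths I deg Cell d M a b" for p
  proof -
    from p have p0: "p \<noteq> []" "hd p = a" "last p = b" "successively (rev_edge I deg Cell d M) p"
      unfolding rpaths_def by auto
    show ?thesis using path_last_unmatched[OF mm nn n1 p0(4,1)] p0 a b by simp
  qed
  note P = this
  have Q1: "a = b \<Longrightarrow> [a] \<in> rpaths I deg Cell d M a b" unfolding rpaths_def by simp
  have Q2: "[a] \<in> rpaths I deg Cell d M a b \<Longrightarrow> a = b" unfolding rpaths_def by simp
  show ?thesis
  proof (cases "a = b")
    case True
    have "rpaths I deg Cell d M a b = {[a]}"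
    proof (intro equalityI subsetI)
      fix p assume "p \<in> rpaths I deg Cell d M a b" then show "p \<in> {[a]}" using P by simp
    next
      fix p assume "p \<in> {[a]}" then show "p \<in> rpaths I deg Cell d M a b" using Q1 True by simp
    qed
    then show ?thesis using True by simp
  next
    case False
    have "rpaths I deg Cell d M a b = {}"
    proof (intro equalityI subsetI)
      fix p assume "p \<in> rpaths I deg Cell d M a b" then show "p \<in> {}" using P Q2 False by metis
    qed simp
    then show ?thesis using False by simp
  qed
qed


theorem mainTheorem11:
  fixes I :: "'c set" and deg :: "'c \<Rightarrow> nat" and Cell :: "'c \<Rightarrow> 'v::real_inner set"
    and d :: "'v \<Rightarrow> 'v" and M :: "('c \<times> 'c) set" and n :: nat
  assumes "orth_based_chain_complex I deg Cell d"
    and "morse_matching I deg Cell d M"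
    and "n \<ge> 1"
    and "nn1_free deg M n"
  shows "(\<forall>x \<in> morse_space I deg Cell M n. morse_Phi I deg Cell d M n x = x)
       \<and> (\<forall>x \<in> morse_space I deg Cell M n. norm (morse_Phi I deg Cell d M n x) = norm x)
       \<and> is_adjoint_between (chain_space I deg Cell (n - 1)) (morse_space I deg Cell M (n - 1))
           (morse_Psi I deg Cell d M (n - 1)) (\<lambda>y. y)"
proof -
  note mm = assms(2) and nn = assms(4) and n1 = assms(3)
  note H = assms(1)[unfolded orth_based_chain_complex_def]
  have fin: "\<And>k. finite (cells_of I deg k)" using H[THEN conjunct1] by blast
  have subI0: "\<forall>a \<in> I. subspace (Cell a) \<and> (\<exists>B. finite B \<and> span B = Cell a)"
    by (rule H[THEN conjunct2, THEN conjunct1])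
  have subI: "\<forall>a\<in>I. subspace (Cell a)" using subI0 by blast
  have orthI: "\<forall>a\<in>I. \<forall>b\<in>I. a \<noteq> b \<longrightarrow> (\<forall>x\<in>Cell a. \<forall>y\<in>Cell b. x \<bullet> y = 0)"
    by (rule H[THEN conjunct2, THEN conjunct2, THEN conjunct1])
  have cI: "\<And>k. cells_of I deg k \<subseteq> I" unfolding cells_of_def by auto
  have sub: "\<And>k. \<forall>a\<in>cells_of I deg k. subspace (Cell a)" using subI cI by blast
  have orth: "\<And>k. \<forall>a\<in>cells_of I deg k. \<forall>b\<in>cells_of I deg k. a \<noteq> b \<longrightarrow> (\<forall>x\<in>Cell a. \<forall>y\<in>Cell b. x \<bullet> y = 0)"
    using orthI cI by blast
  have degc: "\<And>a k. a \<in> cells_of I deg k \<Longrightarrow> deg a = k" unfolding cells_of_def by auto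

  have P1: "morse_Phi I deg Cell d M n x = x" if x: "x \<in> morse_space I deg Cell M n" for x
  proof -
    define J where "J = cells_of I deg n"
    define K where "K = J \<inter> unmatched I M"
    have finJ: "finite J" and finK: "finite K" and KJ: "K \<subseteq> J" using fin by (auto simp: J_def K_def)
    have subK: "\<forall>a\<in>K. subspace (Cell a)" using sub KJ unfolding J_def by blast
    obtain f where f: "\<forall>g\<in>K. f g \<in> Cell g" "x = sum f K"
      using decomp_exists[OF finK subK] x unfolding morse_space_def K_def J_def by blast
    define f' where "f' g = (if g \<in> K then f g else 0)" for g
    have f'in: "\<forall>g\<in>J. f' g \<in> Cell g" using f(1) sub[of n] unfolding f'_def J_def
      by (auto intro: subspace_0)
    have "sum f' J = sum f' K" by (rule sum.mono_neutral_right[OF finJ KJ]) (auto simp: f'_def)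
    also have "\<dots> = sum f K" by (rule sum.cong) (auto simp: f'_def)
    finally have xs: "x = sum f' J" using f(2) by simp
    have pi: "comp_proj J Cell a x = f' a" if "a \<in> J" for a
      using comp_proj_eq[OF finJ _ _ f'in xs that] sub orth unfolding J_def by blast
    have G: "Gamma I deg Cell d M b a y = (if b = a then y else 0)" if "a \<in> K" "b \<in> J" for a b y
      by (rule Gamma_triv, rule rpaths_part1[OF mm nn n1]) (use that degc in \<open>auto simp: K_def J_def\<close>)
    have "morse_Phi I deg Cell d M n x = (\<Sum>a\<in>K. \<Sum>b\<in>J. Gamma I deg Cell d M b a (f' a))"
      unfolding morse_Phi_def J_def[symmetric] K_def[symmetric]
      by (rule sum.cong[OF refl], rule sum.cong[OF refl]) (use pi KJ in auto)
    also have "\<dots> = (\<Sum>a\<in>K. f a)"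
    proof (rule sum.cong[OF refl])
      fix a assume a: "a \<in> K"
      have "(\<Sum>b\<in>J. Gamma I deg Cell d M b a (f' a)) = (\<Sum>b\<in>J. if b = a then f' a else 0)"
        by (rule sum.cong) (use G a in auto)
      also have "\<dots> = f' a" using a KJ finJ by (simp add: sum.delta' subsetD)
      finally show "(\<Sum>b\<in>J. Gamma I deg Cell d M b a (f' a)) = f a" using a by (simp add: f'_def)
    qed
    finally show ?thesis using f(2) by simp
  qed

  define k where "k = n - 1"
  define J where "J = cells_of I deg k"
  define K where "K = J \<inter> unmatched I M"
  have finJ: "finite J" and finK: "finite K" and KJ: "K \<subseteq> J" using fin by (auto simp: J_def K_def)
  have Ysub: "y \<in> chain_space I deg Cell k" if "y \<in> morse_space I deg Cell M k" for y
    using that unfolding morse_space_def chain_space_def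
    by (rule subsetD[OF span_mono, rotated]) auto
  have P3: "morse_Psi I deg Cell d M k x \<in> morse_space I deg Cell M k \<and>
     (\<forall>y\<in>morse_space I deg Cell M k. morse_Psi I deg Cell d M k x \<bullet> y = x \<bullet> y)"
    if x: "x \<in> chain_space I deg Cell k" for x
  proof -
    obtain f where f: "\<forall>g\<in>J. f g \<in> Cell g" "x = sum f J"
      using decomp_exists[OF finJ sub[of k, folded J_def]] x unfolding chain_space_def J_def by blast
    have pi: "comp_proj J Cell a x = f a" if "a \<in> J" for a
      using comp_proj_eq[OF finJ _ _ f that] sub orth unfolding J_def by blast
    have G: "Gamma I deg Cell d M b a y = (if b = a then y else 0)" if "a \<in> J" "b \<in> K" for a b y
      by (rule Gamma_triv, rule rpaths_part3[OF mm nn n1]) (use that degc in \<open>auto simp: K_def J_def k_def\<close>)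
    have "morse_Psi I deg Cell d M k x = (\<Sum>a\<in>J. \<Sum>b\<in>K. Gamma I deg Cell d M b a (f a))"
      unfolding morse_Psi_def J_def[symmetric] K_def[symmetric]
      by (rule sum.cong[OF refl], rule sum.cong[OF refl]) (use pi in auto)
    also have "\<dots> = (\<Sum>a\<in>J. if a \<in> K then f a else 0)"
    proof (rule sum.cong[OF refl])
      fix a assume a: "a \<in> J"
      have "(\<Sum>b\<in>K. Gamma I deg Cell d M b a (f a)) = (\<Sum>b\<in>K. if b = a then f a else 0)"
        by (rule sum.cong) (use G a in auto)
      also have "\<dots> = (if a \<in> K then f a else 0)" using finK by (simp add: sum.delta')
      finally show "(\<Sum>b\<in>K. Gamma I deg Cell d M b a (f a)) = (if a \<in> K then f a else 0)" .
    qed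
    also have "\<dots> = sum f K" using finJ KJ sum.inter_restrict[OF finJ, of f K] by (simp add: Int_absorb1)
    finally have Psi: "morse_Psi I deg Cell d M k x = sum f K" .
    have mem: "sum f K \<in> morse_space I deg Cell M k"
      unfolding morse_space_def
      by (rule span_sum, rule span_base) (use f(1) KJ in \<open>auto simp: K_def J_def\<close>)
    have inner: "sum f K \<bullet> y = x \<bullet> y" if y: "y \<in> morse_space I deg Cell M k" for y
    proof -
      have "x = sum f (J - K) + sum f K" using f(2) finJ KJ by (simp add: sum.subset_diff)
      moreover have "sum f (J - K) \<bullet> y = 0"
        unfolding inner_sum_left
      proof (rule sum.neutral, rule ballI)
        fix g assume g: "g \<in> J - K"
        have "orthogonal (f g) y"
        proof (rule orthogonal_to_span)
          show "y \<in> span (\<Union>a\<in>cells_of I deg k \<inter> unmatched I M. Cell a)" using y unfolding morse_space_def .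
        next
          fix z assume "z \<in> (\<Union>a\<in>cells_of I deg k \<inter> unmatched I M. Cell a)"
          then obtain u where u: "u \<in> K" "z \<in> Cell u" unfolding K_def J_def by blast
          have "u \<noteq> g" using u g by blast
          moreover have "g \<in> I" "u \<in> I" using g u KJ cI unfolding J_def by blast+
          moreover have "f g \<in> Cell g" using f(1) g by blast
          ultimately show "orthogonal (f g) z" using orthI u(2) unfolding orthogonal_def by metis
        qed
        then show "f g \<bullet> y = 0" unfolding orthogonal_def .
      qed
      ultimately show ?thesis by (simp add: inner_add_left)
    qed
    show ?thesis using Psi mem inner by simp
  qed
  have adj: "is_adjoint_between (chain_space I deg Cell k) (morse_space I deg Cell M k)
           (morse_Psi I deg Cell d M k) (\<lambda>y. y)"
    unfolding is_adjoint_between_def using P3 Ysub by blast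
  show ?thesis using P1 adj unfolding k_def by simp
qed

end
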